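(* Let $g$ be a polynomial of degree at least one, let $A\subset\mathbb{C}$ be compact, and let $B\subset PH(A)$ satisfy $g(B)\subset B$. Then $B\subset PH(g^{-1}(A))$. In particular, if $g\in G\in\mathcal{G}$ and $P^*(G)\subset PH(A)$ where $A\subset\mathbb{C}$ is compact, then $P^*(G)\subset PH(g^{-1}(A))$.
   Context: For compact $A\subset\mathbb{C}$, the polynomial hull $PH(A)$ is the union of $A$ and all bounded components of $\mathbb{C}\setminus A$. A polynomial semigroup is a semigroup of non-constant complex polynomials (self-maps of $\hat{\mathbb{C}}$) under composition. $P(G)$ is the closure in $\hat{\mathbb{C}}$ of the set of all critical values of all $g\in G$, and $P^*(G)=P(G)\setminus\{\infty\}$. $\mathcal{G}$: polynomial semigroups all of whose elements have degree $\ge2$ and with $P^*(G)$ bounded in $\mathbb{C}$. *)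

theory Defs
  imports "HOL-Analysis.Analysis" "HOL-Computational_Algebra.Polynomial"
begin

definition PH :: "complex set \<Rightarrow> complex set" where
  "PH A = A \<union> \<Union>{C. C \<in> components (- A) \<and> bounded C}"

definition poly_semigroup :: "complex poly set \<Rightarrow> bool" where
  "poly_semigroup G \<longleftrightarrow> (\<forall>g\<in>G. degree g \<ge> 1) \<and> (\<forall>f\<in>G. \<forall>g\<in>G. pcompose f g \<in> G)"

text \<open>Finite critical values of elements of G; the only other critical value of a polynomial
  of degree at least 2 (as a self-map of the Riemann sphere) is infinity.\<close>
definition finite_crit_values :: "complex poly set \<Rightarrow> complex set" where
  "finite_crit_values G = {poly g z | g z. g \<in> G \<and> poly (pderiv g) z = 0}"

text \<open>P^*(G) = P(G) minus infinity, which equals the closure in C of the finite critical values.\<close>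
definition Pstar :: "complex poly set \<Rightarrow> complex set" where
  "Pstar G = closure (finite_crit_values G)"

definition classG :: "complex poly set set" where
  "classG = {G. poly_semigroup G \<and> (\<forall>g\<in>G. degree g \<ge> 2) \<and> bounded (Pstar G)}"

end

theory Submission
  imports Defs
begin

lemma poly_bounded_preimage:
  fixes g :: "complex poly"
  assumes "degree g \<ge> 1" "bounded (poly g ` U)"
  shows "bounded U"
proof -
  obtain M where M: "\<And>x. x \<in> U \<Longrightarrow> norm (poly g x) \<le> M"
    using assms(2) unfolding bounded_iff by auto
  have "filterlim (poly g) at_infinity at_infinity"
    using assms(1) by (intro filterlim_poly_at_infinity) auto
  then have "eventually (\<lambda>x. max M 0 + 1 \<le> norm (poly g x)) at_infinity"
    using filterlim_at_infinity[of 0 "poly g" at_infinity] by auto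
  then obtain R where R: "\<And>x. norm x \<ge> R \<Longrightarrow> max M 0 + 1 \<le> norm (poly g x)"
    unfolding eventually_at_infinity by auto
  have "\<forall>x\<in>U. norm x \<le> R"
  proof
    fix x assume "x \<in> U"
    then have "norm (poly g x) \<le> M" by (rule M)
    then show "norm x \<le> R" using R[of x] by (cases "norm x \<ge> R") auto
  qed
  then show ?thesis unfolding bounded_iff by auto
qed

lemma PH_memI:
  assumes "z \<notin> A" "bounded (connected_component_set (- A) z)"
  shows "z \<in> PH A"
proof -
  have "connected_component_set (- A) z \<in> components (- A)"
    using assms(1) by (auto simp: components_def)
  moreover have "z \<in> connected_component_set (- A) z" using assms(1) by auto
  ultimately show ?thesis using assms(2) unfolding PH_def by blast
qed

lemma PH_memD:
  assumes "z \<in> PH A" "z \<notin> A"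
  shows "bounded (connected_component_set (- A) z)"
proof -
  obtain C where C: "C \<in> components (- A)" "bounded C" "z \<in> C"
    using assms unfolding PH_def by blast
  then have "C = connected_component_set (- A) z"
    by (metis components_iff connected_component_eq)
  then show ?thesis using C by simp
qed

lemma part1:
  fixes g :: "complex poly"
  assumes "degree g \<ge> 1" "B \<subseteq> PH A" "poly g ` B \<subseteq> B"
  shows "B \<subseteq> PH (poly g -` A)"
proof
  fix z assume zB: "z \<in> B"
  show "z \<in> PH (poly g -` A)"
  proof (rule ccontr)
    assume nz: "z \<notin> PH (poly g -` A)"
    then have zn: "z \<notin> poly g -` A" unfolding PH_def by auto
    define U where "U = connected_component_set (- (poly g -` A)) z"
    have ub: "\<not> bounded U" using nz zn PH_memI unfolding U_def by blast
    have Usub: "U \<subseteq> - (poly g -` A)" unfolding U_def by (rule connected_component_subset)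
    have conn: "connected (poly g ` U)"
      unfolding U_def by (intro connected_continuous_image continuous_intros connected_connected_component)
    have img: "poly g ` U \<subseteq> - A" using Usub by auto
    have gz: "poly g z \<in> poly g ` U" using zn unfolding U_def by auto
    have gzB: "poly g z \<in> PH A" using zB assms(2,3) by auto
    have gzA: "poly g z \<notin> A" using zn by auto
    have "poly g ` U \<subseteq> connected_component_set (- A) (poly g z)"
      using conn img gz by (intro connected_component_maximal) auto
    then have "bounded (poly g ` U)"
      using PH_memD[OF gzB gzA] bounded_subset by blast
    then have "bounded U" using poly_bounded_preimage assms(1) by blast
    then show False using ub by simp
  qed
qed

lemma crit_invariant:
  assumes "poly_semigroup G" "g \<in> G"
  shows "poly g ` Pstar G \<subseteq> Pstar G"
proof -
  have "poly g ` finite_crit_values G \<subseteq> finite_crit_values G"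
  proof
    fix w assume "w \<in> poly g ` finite_crit_values G"
    then obtain h z where hz: "h \<in> G" "poly (pderiv h) z = 0" "w = poly g (poly h z)"
      unfolding finite_crit_values_def by auto
    have "pcompose g h \<in> G" using assms hz(1) unfolding poly_semigroup_def by auto
    moreover have "poly (pderiv (pcompose g h)) z = 0"
      using hz(2) by (simp add: pderiv_pcompose)
    moreover have "w = poly (pcompose g h) z" using hz(3) by (simp add: poly_pcompose)
    ultimately show "w \<in> finite_crit_values G" unfolding finite_crit_values_def by blast
  qed
  then have "poly g ` finite_crit_values G \<subseteq> closure (finite_crit_values G)"
    using closure_subset by blast
  then show ?thesis unfolding Pstar_def
    by (intro image_closure_subset) (auto intro: continuous_intros)
qed

theorem lemma2p5:
  shows "(\<forall>(g::complex poly) (A::complex set) (B::complex set).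
            degree g \<ge> 1 \<and> compact A \<and> B \<subseteq> PH A \<and> poly g ` B \<subseteq> B
            \<longrightarrow> B \<subseteq> PH (poly g -` A))
       \<and> (\<forall>(g::complex poly) (G::complex poly set) (A::complex set).
            g \<in> G \<and> G \<in> classG \<and> compact A \<and> Pstar G \<subseteq> PH A
            \<longrightarrow> Pstar G \<subseteq> PH (poly g -` A))"
proof (intro conjI allI impI)
  fix g :: "complex poly" and A B :: "complex set"
  assume "degree g \<ge> 1 \<and> compact A \<and> B \<subseteq> PH A \<and> poly g ` B \<subseteq> B"
  then show "B \<subseteq> PH (poly g -` A)" using part1 by blast
next
  fix g :: "complex poly" and G A
  assume a: "g \<in> G \<and> G \<in> classG \<and> compact A \<and> Pstar G \<subseteq> PH A"
  then have "degree g \<ge> 1" "poly_semigroup G" unfolding classG_def by auto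
  moreover have "poly g ` Pstar G \<subseteq> Pstar G" using crit_invariant a \<open>poly_semigroup G\<close> by blast
  ultimately show "Pstar G \<subseteq> PH (poly g -` A)"
    using part1[of g "Pstar G" A] a by blast
qed

end
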